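(* Every $F_{\sigma}$-ideal on $\omega$ is good.
   Context: An ideal on $\omega$ is $F_\sigma$ if it is an $F_\sigma$ subset of $2^\omega$ (via characteristic functions). For an ideal $\mathcal{J}$, $\mathcal{J}^+$ denotes the sets not in $\mathcal{J}$. $\mathcal{J}$ is called good if every uncountable family $\mathcal{F}\subseteq\mathcal{J}^{+}$ has a subfamily $\{B_{n}:n\in\omega\}\subseteq\mathcal{F}$ such that for every $f\in\omega^{\omega}$ there is a sequence $\{C_{n}:n\in\omega\}\subseteq\mathcal{J}$ with $C_{n}\subseteq B_{n}\setminus f(n)$ for every $n$ such that $\bigcup_{n}C_{n}\in\mathcal{J}^{+}$. *)

theory Defs
  imports "HOL-Analysis.Analysis"
begin

definition ideal_on_nat :: "nat set set \<Rightarrow> bool" where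
  "ideal_on_nat J \<longleftrightarrow>
     (\<forall>A B. A \<in> J \<longrightarrow> B \<subseteq> A \<longrightarrow> B \<in> J) \<and>
     (\<forall>A B. A \<in> J \<longrightarrow> B \<in> J \<longrightarrow> A \<union> B \<in> J) \<and>
     (\<forall>A. finite A \<longrightarrow> A \<in> J) \<and>
     UNIV \<notin> J"

text \<open>Characteristic function of a subset of nat, as a point of the Cantor space
  nat => bool (product topology of the discrete space bool).\<close>
definition char_fun :: "nat set \<Rightarrow> (nat \<Rightarrow> bool)" where
  "char_fun A = (\<lambda>n. n \<in> A)"

definition fsigma_ideal :: "nat set set \<Rightarrow> bool" where
  "fsigma_ideal J \<longleftrightarrow> ideal_on_nat J \<and> fsigma_in euclidean (char_fun ` J)"

definition positive_sets :: "nat set set \<Rightarrow> nat set set" where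
  "positive_sets J = {A. A \<notin> J}"

definition good_ideal :: "nat set set \<Rightarrow> bool" where
  "good_ideal J \<longleftrightarrow>
     (\<forall>F. F \<subseteq> positive_sets J \<and> uncountable F \<longrightarrow>
        (\<exists>B :: nat \<Rightarrow> nat set. inj B \<and> range B \<subseteq> F \<and>
           (\<forall>f :: nat \<Rightarrow> nat. \<exists>C :: nat \<Rightarrow> nat set.
              (\<forall>n. C n \<in> J \<and> C n \<subseteq> B n - {..<f n}) \<and>
              (\<Union>n. C n) \<in> positive_sets J)))"

end

theory Submission
  imports Defs
begin

lemma nbhd_lemma:
  fixes K :: "(nat \<Rightarrow> bool) set"
  assumes "closed K" "x \<notin> K"
  shows "\<exists>m. \<forall>y. (\<forall>i<m. y i = x i) \<longrightarrow> y \<notin> K"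
proof -
  have "openin (product_topology (\<lambda>i. euclidean) UNIV) (- K)" "x \<in> - K"
    using assms open_fun_def by auto
  from product_topology_open_contains_basis[OF this]
  obtain X where X: "x \<in> (\<Pi>\<^sub>E i\<in>UNIV. X i)" "\<forall>i. open (X i)" "finite {i. X i \<noteq> UNIV}"
    "(\<Pi>\<^sub>E i\<in>UNIV. X i) \<subseteq> - K" by auto
  obtain m where m: "{i. X i \<noteq> UNIV} \<subseteq> {..<m}" using X(3) finite_nat_bounded by blast
  show ?thesis
  proof (intro exI allI impI)
    fix y :: "nat \<Rightarrow> bool" assume y: "\<forall>i<m. y i = x i"
    have "y \<in> (\<Pi>\<^sub>E i\<in>UNIV. X i)"
    proof -
      have "y i \<in> X i" for i
      proof (cases "i < m")
        case True then show ?thesis using y X(1) by auto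
      next
        case False then show ?thesis using m by auto
      qed
      then show ?thesis by auto
    qed
    then show "y \<notin> K" using X(4) by auto
  qed
qed

lemma key:
  fixes K :: "nat \<Rightarrow> (nat\<Rightarrow>bool) set" and B :: "nat \<Rightarrow> nat set" and f :: "nat \<Rightarrow> nat"
  assumes cl: "\<And>n. closed (K n)"
    and pos: "\<And>n D E. finite D \<Longrightarrow> finite E \<Longrightarrow> char_fun (D \<union> (B n - E)) \<notin> K n"
  shows "\<exists>C. (\<forall>n. finite (C n) \<and> C n \<subseteq> B n - {..<f n}) \<and> (\<forall>n. char_fun (\<Union>n. C n) \<notin> K n)"
proof -
  define X where "X n a D = D \<union> (B n - {..<max (f n) a})" for n a D
  define M where "M n a D = (SOME m. a \<le> m \<and> (\<forall>y. (\<forall>i<m. y i = char_fun (X n a D) i) \<longrightarrow> y \<notin> K n))" for n a D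
  have M: "a \<le> M n a D \<and> (\<forall>y. (\<forall>i<M n a D. y i = char_fun (X n a D) i) \<longrightarrow> y \<notin> K n)"
    if "finite D" for n a D
  proof -
    have "char_fun (X n a D) \<notin> K n" unfolding X_def using pos that by auto
    then have "\<exists>m0. \<forall>y. (\<forall>i<m0. y i = char_fun (X n a D) i) \<longrightarrow> y \<notin> K n"
      by (rule nbhd_lemma[OF cl])
    then obtain m0 where m0: "\<forall>y. (\<forall>i<m0. y i = char_fun (X n a D) i) \<longrightarrow> y \<notin> K n"
      by (rule exE)
    have "\<exists>m. a \<le> m \<and> (\<forall>y. (\<forall>i<m. y i = char_fun (X n a D) i) \<longrightarrow> y \<notin> K n)"
      by (rule exI[of _ "max a m0"]) (use m0 in auto)
    then show ?thesis unfolding M_def by (rule someI_ex)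
  qed
  define S where "S = rec_nat (0::nat, {}::nat set) (\<lambda>n s. (M n (fst s) (snd s), X n (fst s) (snd s) \<inter> {..<M n (fst s) (snd s)}))"
  define a where "a n = fst (S n)" for n
  define D where "D n = snd (S n)" for n
  have a0: "a 0 = 0" and D0: "D 0 = {}" unfolding a_def D_def S_def by auto
  have aS: "a (Suc n) = M n (a n) (D n)" for n unfolding a_def D_def S_def by simp
  have DS: "D (Suc n) = X n (a n) (D n) \<inter> {..<a (Suc n)}" for n
    unfolding a_def D_def S_def by simp
  have Dfin: "finite (D n)" for n
    by (cases n) (auto simp: D0 DS)
  have amono: "a n \<le> a (Suc n)" for n using M[OF Dfin] aS by simp
  hence ainc: "incseq a" by (rule incseq_SucI)
  define C where "C n = B n \<inter> {max (f n) (a n)..<a (Suc n)}" for n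
  have Dsub: "D n \<subseteq> {..<a n}" for n
    by (cases n) (auto simp: D0 DS)
  have DSC: "D (Suc n) = D n \<union> C n" for n
    using Dsub[of n] amono[of n] unfolding DS X_def C_def by auto
  have DU: "D k = (\<Union>j<k. C j)" for k
    by (induction k) (auto simp: D0 DSC lessThan_Suc)
  define Z where "Z = (\<Union>n. C n)"
  have ZD: "Z \<inter> {..<a k} = D k" for k
  proof -
    have "C j \<inter> {..<a k} = {}" if "k \<le> j" for j
      using ainc that unfolding C_def incseq_def by fastforce
    moreover have "C j \<subseteq> {..<a k}" if "j < k" for j
    proof -
      have "a (Suc j) \<le> a k" using ainc that unfolding incseq_def by auto
      then show ?thesis unfolding C_def by auto
    qed
    ultimately have "Z \<inter> {..<a k} = (\<Union>j<k. C j)" unfolding Z_def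
    proof (intro equalityI subsetI)
      fix i assume i: "i \<in> (\<Union>n. C n) \<inter> {..<a k}"
      then obtain j where j: "i \<in> C j" "i < a k" by auto
      have "j < k"
      proof (rule ccontr)
        assume "\<not> j < k"
        then have "C j \<inter> {..<a k} = {}" using \<open>\<And>j. k \<le> j \<Longrightarrow> C j \<inter> {..<a k} = {}\<close> by simp
        then show False using j by auto
      qed
      then show "i \<in> (\<Union>j<k. C j)" using j by auto
    next
      fix i assume "i \<in> (\<Union>j<k. C j)"
      then show "i \<in> (\<Union>n. C n) \<inter> {..<a k}" using \<open>\<And>j. j < k \<Longrightarrow> C j \<subseteq> {..<a k}\<close> by blast
    qed
    then show ?thesis using DU by simp
  qed
  have "char_fun Z \<notin> K n" for n
  proof -
    have "\<forall>i<a (Suc n). char_fun Z i = char_fun (X n (a n) (D n)) i"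
    proof (intro allI impI)
      fix i assume i: "i < a (Suc n)"
      have "i \<in> Z \<longleftrightarrow> i \<in> D (Suc n)" using ZD[of "Suc n"] i by auto
      also have "\<dots> \<longleftrightarrow> i \<in> X n (a n) (D n)" using DS[of n] i by auto
      finally show "char_fun Z i = char_fun (X n (a n) (D n)) i" unfolding char_fun_def .
    qed
    moreover have "\<forall>y. (\<forall>i<a (Suc n). y i = char_fun (X n (a n) (D n)) i) \<longrightarrow> y \<notin> K n"
      unfolding aS by (rule conjunct2[OF M[OF Dfin]])
    ultimately show ?thesis by blast
  qed
  moreover have "finite (C n) \<and> C n \<subseteq> B n - {..<f n}" for n unfolding C_def by auto
  ultimately show ?thesis unfolding Z_def by blast
qed

theorem mainTheorem17:
  fixes J :: "nat set set"
  assumes "fsigma_ideal J"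
  shows "good_ideal J"
proof -
  have id: "ideal_on_nat J" and fs: "fsigma_in euclidean (char_fun ` J)"
    using assms unfolding fsigma_ideal_def by auto
  have sub: "\<And>A B. A \<in> J \<Longrightarrow> B \<subseteq> A \<Longrightarrow> B \<in> J"
    and un: "\<And>A B. A \<in> J \<Longrightarrow> B \<in> J \<Longrightarrow> A \<union> B \<in> J"
    and fin: "\<And>A. finite A \<Longrightarrow> A \<in> J"
    using id unfolding ideal_on_nat_def by blast+
  obtain T where T: "countable T" "\<And>c. c \<in> T \<Longrightarrow> closed c" "\<Union>T = char_fun ` J"
  proof -
    have "\<exists>U. countable U \<and> U \<subseteq> Collect (closedin euclidean) \<and> \<Union>U = char_fun ` J"
      using fs unfolding fsigma_in_def union_of_def by simp
    then obtain U where U0: "countable U \<and> U \<subseteq> Collect (closedin euclidean) \<and> \<Union>U = char_fun ` J"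
      by (rule exE)
    from U0 have U: "countable U" "U \<subseteq> Collect (closedin euclidean)" "\<Union>U = char_fun ` J"
      by simp_all
    have "\<And>c. c \<in> U \<Longrightarrow> closed c" using U(2) by (simp add: subset_iff)
    then show ?thesis using that U(1,3) by blast
  qed
  have "T \<noteq> {}" using T(3) fin[of "{}"] by auto
  define K where "K = from_nat_into T"
  have rK: "range K = T" unfolding K_def using range_from_nat_into[OF \<open>T \<noteq> {}\<close> T(1)] .
  have cl: "closed (K n)" for n using T(2) rK by auto
  have inj_cf: "inj char_fun" unfolding char_fun_def inj_def by (simp add: fun_eq_iff set_eq_iff)
  have memJ: "A \<in> J \<longleftrightarrow> (\<exists>n. char_fun A \<in> K n)" for A
  proof -
    have "A \<in> J \<longleftrightarrow> char_fun A \<in> char_fun ` J" using inj_cf by (auto simp: inj_image_mem_iff)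
    also have "\<dots> \<longleftrightarrow> (\<exists>n. char_fun A \<in> K n)" using T(3) rK by auto
    finally show ?thesis .
  qed
  show ?thesis unfolding good_ideal_def
  proof (intro allI impI)
    fix F assume F: "F \<subseteq> positive_sets J \<and> uncountable F"
    then have "infinite F" using countable_finite by blast
    then obtain B :: "nat \<Rightarrow> nat set" where B: "inj B" "range B \<subseteq> F"
      using infinite_countable_subset by blast
    have Bpos: "B n \<notin> J" for n using B F unfolding positive_sets_def by auto
    show "\<exists>B :: nat \<Rightarrow> nat set. inj B \<and> range B \<subseteq> F \<and>
           (\<forall>f :: nat \<Rightarrow> nat. \<exists>C :: nat \<Rightarrow> nat set.
              (\<forall>n. C n \<in> J \<and> C n \<subseteq> B n - {..<f n}) \<and>
              (\<Union>n. C n) \<in> positive_sets J)"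
    proof (rule exI[of _ B], intro conjI allI)
      show "inj B" "range B \<subseteq> F" using B by auto
      fix f :: "nat \<Rightarrow> nat"
      have pos: "char_fun (D \<union> (B n - E)) \<notin> K n" if "finite D" "finite E" for n D E
      proof
        assume "char_fun (D \<union> (B n - E)) \<in> K n"
        then have "D \<union> (B n - E) \<in> J" using memJ by blast
        then have "(D \<union> (B n - E)) \<union> E \<in> J" using un fin \<open>finite E\<close> by blast
        then have "B n \<in> J" using sub by blast
        then show False using Bpos by blast
      qed
      from key[where f=f, OF cl pos] obtain C where C0:
        "(\<forall>n. finite (C n) \<and> C n \<subseteq> B n - {..<f n}) \<and> (\<forall>n. char_fun (\<Union>n. C n) \<notin> K n)"
        by (rule exE)
      from C0 have C1: "\<And>n. finite (C n) \<and> C n \<subseteq> B n - {..<f n}" by simp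
      from C0 have C2: "\<And>n. char_fun (\<Union>n. C n) \<notin> K n" by simp
      have "(\<forall>n. C n \<in> J \<and> C n \<subseteq> B n - {..<f n})"
        using C1 fin by simp
      moreover have "(\<Union>n. C n) \<in> positive_sets J"
        unfolding positive_sets_def using C2 memJ by simp
      ultimately show "\<exists>C :: nat \<Rightarrow> nat set.
              (\<forall>n. C n \<in> J \<and> C n \<subseteq> B n - {..<f n}) \<and>
              (\<Union>n. C n) \<in> positive_sets J"
        by (intro exI[of _ C] conjI)
    qed
  qed
qed

end
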